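(* For integers $r\ge0$ and $k\ge 1$ let $\mathcal{N}(r;k)$ be the number of proper complete $(r-1,k)$-graphs on the vertex set $\{1,\dots,k\}$, and set $\mathcal{N}(r;0)=1$ for all $r\ge0$. Then $\mathcal{N}(0;k)=1$ for all $k$, and for $r,k\ge1$ \[\mathcal{N}(r;k)=\frac12\sum_{a=0}^{k}\binom{k}{a}\mathcal{N}(r-1;a)\mathcal{N}(r-1;k-a).\] Equivalently the formal series $E(X;r)=\sum_{k\ge0}\mathcal{N}(r;k)X^k/k!$ satisfy $E(X;0)=e^X$ and $E(X;r)=\tfrac12\big(1+E(X;r-1)^2\big)$ for $r\ge1$. Consequently there are real numbers $\nu(r;m)\ge0$ ($0\le m\le 2^r$) with $\sum_m\nu(r;m)=1$ such that $\mathcal{N}(r;k)=\sum_{m=0}^{2^r}\nu(r;m)m^k$ for all $k\ge 0$ (with $0^0=1$), and $\nu(r;0)=1-\mu_r$.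
   Context: A $(D,k)$-graph is a weighted graph on $k$ vertices in which each edge $ij$ carries an integer weight $d(i,j)\in[-1,D]$; it is complete if every pair of distinct vertices is joined by an edge. A complete $(D,k)$-graph is proper if for all distinct vertices $a,b,c$ with $d(a,b)\le d(a,c)\le d(b,c)$ one has either $d(a,b)=d(a,c)=d(b,c)=-1$, or $d(a,b)<d(a,c)=d(b,c)$. (A graph on one vertex has no edges and counts as proper complete.) The constants $\mu_r$ are defined by $\mu_0=1$, $\mu_{r+1}=\mu_r-\tfrac12\mu_r^2$. *)

theory Defs
  imports Complex_Main "HOL-Computational_Algebra.Formal_Power_Series"
begin

text \<open>Complete (D,k)-graphs on vertex set {1..k}: symmetric weight function
  with integer weights in [-1,D] on pairs of distinct vertices; the value is
  normalised to 0 outside the edge set so that the set of graphs is finite.\<close>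
definition complete_graphs :: "int \<Rightarrow> nat \<Rightarrow> (nat \<Rightarrow> nat \<Rightarrow> int) set" where
  "complete_graphs D k =
     {d. (\<forall>i j. d i j = d j i)
       \<and> (\<forall>i\<in>{1..k}. \<forall>j\<in>{1..k}. i \<noteq> j \<longrightarrow> -1 \<le> d i j \<and> d i j \<le> D)
       \<and> (\<forall>i j. \<not> (i \<in> {1..k} \<and> j \<in> {1..k} \<and> i \<noteq> j) \<longrightarrow> d i j = 0)}"

definition proper :: "nat \<Rightarrow> (nat \<Rightarrow> nat \<Rightarrow> int) \<Rightarrow> bool" where
  "proper k d \<longleftrightarrow>
     (\<forall>a\<in>{1..k}. \<forall>b\<in>{1..k}. \<forall>c\<in>{1..k}.
        a \<noteq> b \<and> a \<noteq> c \<and> b \<noteq> c \<and> d a b \<le> d a c \<and> d a c \<le> d b c \<longrightarrow>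
          (d a b = -1 \<and> d a c = -1 \<and> d b c = -1) \<or> (d a b < d a c \<and> d a c = d b c))"

definition NN :: "nat \<Rightarrow> nat \<Rightarrow> nat" where
  "NN r k = (if k = 0 then 1
             else card {d \<in> complete_graphs (int r - 1) k. proper k d})"

fun mu :: "nat \<Rightarrow> real" where
  "mu 0 = 1"
| "mu (Suc r) = mu r - (1/2) * (mu r)^2"

definition EGF :: "nat \<Rightarrow> real fps" where
  "EGF r = Abs_fps (\<lambda>k. real (NN r k) / fact k)"

end

theory Submission imports Defs begin

definition properS :: "nat set \<Rightarrow> (nat\<Rightarrow>nat\<Rightarrow>int) \<Rightarrow> bool" where
 "properS S d \<longleftrightarrow> (\<forall>a\<in>S. \<forall>b\<in>S. \<forall>c\<in>S. a \<noteq> b \<and> a \<noteq> c \<and> b \<noteq> c \<and> d a b \<le> d a c \<and> d a c \<le> d b c \<longrightarrow>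
   (d a b = -1 \<and> d a c = -1 \<and> d b c = -1) \<or> (d a b < d a c \<and> d a c = d b c))"

definition GS :: "int \<Rightarrow> nat set \<Rightarrow> (nat\<Rightarrow>nat\<Rightarrow>int) set" where
 "GS D S = {d. (\<forall>i j. d i j = d j i) \<and> (\<forall>i\<in>S. \<forall>j\<in>S. i \<noteq> j \<longrightarrow> -1 \<le> d i j \<and> d i j \<le> D)
     \<and> (\<forall>i j. \<not> (i\<in>S \<and> j\<in>S \<and> i\<noteq>j) \<longrightarrow> d i j = 0) \<and> properS S d}"

lemma NN_GS: "NN r k = card (GS (int r - 1) {1..k})"
proof (cases "k = 0")
  case True
  have "GS D {} = {\<lambda>_ _. 0}" for D
    by (auto simp: GS_def properS_def fun_eq_iff)
  then show ?thesis using True by (simp add: NN_def)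
next
  case False
  have "{d \<in> complete_graphs (int r - 1) k. proper k d} = GS (int r - 1) {1..k}"
    by (auto simp: GS_def properS_def complete_graphs_def proper_def)
  then show ?thesis using False by (simp add: NN_def)
qed

lemma finite_GS: assumes "finite S" shows "finite (GS D S)"
proof -
  let ?f = "\<lambda>d. restrict (\<lambda>p. d (fst p) (snd p)) (S \<times> S)"
  have "inj_on ?f (GS D S)"
  proof (rule inj_onI)
    fix d e assume d: "d \<in> GS D S" and e: "e \<in> GS D S" and eq: "?f d = ?f e"
    show "d = e"
    proof (intro ext)
      fix i j
      show "d i j = e i j"
      proof (cases "i \<in> S \<and> j \<in> S")
        case True
        then show ?thesis using fun_cong[OF eq, of "(i,j)"] by simp
      next
        case False
        then show ?thesis using d e by (auto simp: GS_def)
      qed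
    qed
  qed
  moreover have "?f ` GS D S \<subseteq> PiE (S \<times> S) (\<lambda>_. {-1..max D 0})"
    by (force simp: GS_def)
  moreover have "finite (PiE (S \<times> S) (\<lambda>_. {-1..max D 0}))"
    using assms by (intro finite_PiE) auto
  ultimately show ?thesis using inj_on_finite by blast
qed

lemma properD: "properS S d \<Longrightarrow> a\<in>S \<Longrightarrow> b\<in>S \<Longrightarrow> c\<in>S \<Longrightarrow> a \<noteq> b \<Longrightarrow> a \<noteq> c \<Longrightarrow> b \<noteq> c
  \<Longrightarrow> d a b \<le> d a c \<Longrightarrow> d a c \<le> d b c \<Longrightarrow>
   (d a b = -1 \<and> d a c = -1 \<and> d b c = -1) \<or> (d a b < d a c \<and> d a c = d b c)"
  unfolding properS_def by blast

lemma ultra: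
  assumes "d \<in> GS D S" "a\<in>S" "b\<in>S" "c\<in>S" "a\<noteq>b" "a\<noteq>c" "b\<noteq>c"
  shows "d a b \<le> max (d a c) (d b c)"
    and "d a b = d a c \<Longrightarrow> d a c = d b c \<Longrightarrow> d a b = -1"
proof -
  have s: "d b a = d a b" "d c a = d a c" "d c b = d b c" using assms(1) by (auto simp: GS_def)
  have P: "properS S d" using assms(1) by (auto simp: GS_def)
  note Q = properD[OF P]
  have 1: "d a b \<le> d a c \<Longrightarrow> d a c \<le> d b c \<Longrightarrow> (d a b = -1 \<and> d a c = -1 \<and> d b c = -1) \<or> (d a b < d a c \<and> d a c = d b c)"
    using Q[of a b c] assms by auto
  have 2: "d a c \<le> d a b \<Longrightarrow> d a b \<le> d b c \<Longrightarrow> (d a c = -1 \<and> d a b = -1 \<and> d b c = -1) \<or> (d a c < d a b \<and> d a b = d b c)"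
    using Q[of a c b] assms s by auto
  have 3: "d a b \<le> d b c \<Longrightarrow> d b c \<le> d a c \<Longrightarrow> (d a b = -1 \<and> d b c = -1 \<and> d a c = -1) \<or> (d a b < d b c \<and> d b c = d a c)"
    using Q[of b a c] assms s by auto
  have 4: "d b c \<le> d a b \<Longrightarrow> d a b \<le> d a c \<Longrightarrow> (d b c = -1 \<and> d a b = -1 \<and> d a c = -1) \<or> (d b c < d a b \<and> d a b = d a c)"
    using Q[of b c a] assms s by auto
  have 5: "d a c \<le> d b c \<Longrightarrow> d b c \<le> d a b \<Longrightarrow> (d a c = -1 \<and> d b c = -1 \<and> d a b = -1) \<or> (d a c < d b c \<and> d b c = d a b)"
    using Q[of c a b] assms s by auto
  have 6: "d b c \<le> d a c \<Longrightarrow> d a c \<le> d a b \<Longrightarrow> (d b c = -1 \<and> d a c = -1 \<and> d a b = -1) \<or> (d b c < d a c \<and> d a c = d a b)"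
    using Q[of c b a] assms s by auto
  show "d a b \<le> max (d a c) (d b c)" using 1 2 3 4 5 6 by linarith
  show "d a b = d a c \<Longrightarrow> d a c = d b c \<Longrightarrow> d a b = -1" using 1 by linarith
qed


definition glue :: "int \<Rightarrow> nat set \<Rightarrow> nat set \<Rightarrow> (nat\<Rightarrow>nat\<Rightarrow>int) \<Rightarrow> (nat\<Rightarrow>nat\<Rightarrow>int) \<Rightarrow> (nat\<Rightarrow>nat\<Rightarrow>int)" where
 "glue D S A d1 d2 = (\<lambda>i j. if i \<in> A \<and> j \<in> A then d1 i j else if i \<in> S - A \<and> j \<in> S - A then d2 i j
     else if i \<in> S \<and> j \<in> S then D else 0)"

definition restr :: "nat set \<Rightarrow> (nat\<Rightarrow>nat\<Rightarrow>int) \<Rightarrow> (nat\<Rightarrow>nat\<Rightarrow>int)" where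
 "restr A d = (\<lambda>i j. if i \<in> A \<and> j \<in> A then d i j else 0)"

lemma GS_range: "d \<in> GS D S \<Longrightarrow> i \<in> S \<Longrightarrow> j \<in> S \<Longrightarrow> i \<noteq> j \<Longrightarrow> -1 \<le> d i j \<and> d i j \<le> D"
  by (auto simp: GS_def)
lemma GS_zero: "d \<in> GS D S \<Longrightarrow> \<not> (i\<in>S \<and> j\<in>S \<and> i\<noteq>j) \<Longrightarrow> d i j = 0"
  by (auto simp: GS_def)
lemma GS_sym: "d \<in> GS D S \<Longrightarrow> d i j = d j i"
  by (auto simp: GS_def)
lemma GS_proper: "d \<in> GS D S \<Longrightarrow> properS S d"
  by (auto simp: GS_def)

lemma glue_in:
  assumes D: "D \<ge> 0" and AS: "A \<subseteq> S" and d1: "d1 \<in> GS (D-1) A" and d2: "d2 \<in> GS (D-1) (S-A)"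
  shows "glue D S A d1 d2 \<in> GS D S"
proof -
  let ?g = "glue D S A d1 d2"
  have gA: "x\<in>A \<Longrightarrow> y\<in>A \<Longrightarrow> ?g x y = d1 x y" for x y by (simp add: glue_def)
  have gB: "x\<in>S-A \<Longrightarrow> y\<in>S-A \<Longrightarrow> ?g x y = d2 x y" for x y by (auto simp: glue_def)
  have gX: "x\<in>S \<Longrightarrow> y\<in>S \<Longrightarrow> (x\<in>A) \<noteq> (y\<in>A) \<Longrightarrow> ?g x y = D" for x y by (auto simp: glue_def)
  have gO: "\<not> (x\<in>S \<and> y\<in>S) \<Longrightarrow> ?g x y = 0" for x y using AS by (auto simp: glue_def)
  have sym: "?g i j = ?g j i" for i j
    using GS_sym[OF d1] GS_sym[OF d2] by (auto simp: glue_def)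
  have rng: "-1 \<le> ?g i j \<and> ?g i j \<le> D" if "i\<in>S" "j\<in>S" "i\<noteq>j" for i j
    using that GS_range[OF d1, of i j] GS_range[OF d2, of i j] gA gB gX D by (cases "i\<in>A"; cases "j\<in>A") auto
  have zer: "?g i j = 0" if "\<not> (i\<in>S \<and> j\<in>S \<and> i\<noteq>j)" for i j
  proof (cases "i\<in>S \<and> j\<in>S")
    case True then have "i = j" using that by auto
    then show ?thesis using True GS_zero[OF d1, of i i] GS_zero[OF d2, of i i] gA gB by (cases "i\<in>A") auto
  qed (use gO in auto)
  have prp: "properS S ?g"
    unfolding properS_def
  proof (intro ballI impI)
    fix a b c assume abc: "a\<in>S" "b\<in>S" "c\<in>S" and h: "a \<noteq> b \<and> a \<noteq> c \<and> b \<noteq> c \<and> ?g a b \<le> ?g a c \<and> ?g a c \<le> ?g b c"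
    show "(?g a b = -1 \<and> ?g a c = -1 \<and> ?g b c = -1) \<or> (?g a b < ?g a c \<and> ?g a c = ?g b c)"
    proof (cases "a\<in>A \<and> b\<in>A \<and> c\<in>A")
      case True
      then show ?thesis using h gA properD[OF GS_proper[OF d1], of a b c] by auto
    next
      case F1: False
      show ?thesis
      proof (cases "a\<notin>A \<and> b\<notin>A \<and> c\<notin>A")
        case True
        then show ?thesis using h abc gB properD[OF GS_proper[OF d2], of a b c] by auto
      next
        case False
        have r1: "?g a b \<le> D - 1" if "(a\<in>A) = (b\<in>A)"
          using that abc h GS_range[OF d1, of a b] GS_range[OF d2, of a b] gA gB by (cases "a\<in>A") auto
        have r2: "?g a c \<le> D - 1" if "(a\<in>A) = (c\<in>A)"
          using that abc h GS_range[OF d1, of a c] GS_range[OF d2, of a c] gA gB by (cases "a\<in>A") auto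
        have r3: "?g b c \<le> D - 1" if "(b\<in>A) = (c\<in>A)"
          using that abc h GS_range[OF d1, of b c] GS_range[OF d2, of b c] gA gB by (cases "b\<in>A") auto
        have x1: "?g a b = D" if "(a\<in>A) \<noteq> (b\<in>A)" using that abc gX by auto
        have x2: "?g a c = D" if "(a\<in>A) \<noteq> (c\<in>A)" using that abc gX by auto
        have x3: "?g b c = D" if "(b\<in>A) \<noteq> (c\<in>A)" using that abc gX by auto
        show ?thesis using F1 False r1 r2 r3 x1 x2 x3 h by (cases "a\<in>A"; cases "b\<in>A"; cases "c\<in>A") auto
      qed
    qed
  qed
  show ?thesis unfolding GS_def using sym rng zer prp by blast
qed


lemma restr_in:
  assumes d: "d \<in> GS D S" and AS: "A \<subseteq> S"
    and lt: "\<And>i j. i\<in>A \<Longrightarrow> j\<in>A \<Longrightarrow> i \<noteq> j \<Longrightarrow> d i j < D"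
  shows "restr A d \<in> GS (D-1) A"
proof -
  have sym: "restr A d i j = restr A d j i" for i j using GS_sym[OF d] by (auto simp: restr_def)
  have rng: "-1 \<le> restr A d i j \<and> restr A d i j \<le> D - 1" if "i\<in>A" "j\<in>A" "i\<noteq>j" for i j
    using that GS_range[OF d, of i j] lt[of i j] AS by (auto simp: restr_def)
  have zer: "restr A d i j = 0" if "\<not> (i\<in>A \<and> j\<in>A \<and> i\<noteq>j)" for i j
    using that GS_zero[OF d, of i i] AS by (auto simp: restr_def)
  have prp: "properS A (restr A d)"
    using GS_proper[OF d] AS unfolding properS_def restr_def by (simp add: subset_iff)
  show ?thesis unfolding GS_def using sym rng zer prp by blast
qed

lemma memb:
  assumes D: "D \<ge> 0" and AS: "A \<subseteq> S" and d1: "d1 \<in> GS (D-1) A" and d2: "d2 \<in> GS (D-1) (S-A)"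
    and j: "j \<in> S" "j \<noteq> s0" and s0: "s0 \<in> S"
  shows "(j \<in> A) = ((s0 \<in> A) = (glue D S A d1 d2 s0 j < D))"
  using GS_range[OF d1, of s0 j] GS_range[OF d2, of s0 j] j s0 AS
  by (cases "j \<in> A"; cases "s0 \<in> A") (auto simp: glue_def)

lemma glue_restr1:
  assumes d1: "d1 \<in> GS (D-1) A"
  shows "d1 = restr A (glue D S A d1 d2)"
  using GS_zero[OF d1] by (auto simp: fun_eq_iff restr_def glue_def)

lemma glue_restr2:
  assumes d2: "d2 \<in> GS (D-1) (S-A)"
  shows "d2 = restr (S-A) (glue D S A d1 d2)"
  using GS_zero[OF d2] by (auto simp: fun_eq_iff restr_def glue_def)

lemma classes:
  assumes d: "d \<in> GS D S" and D: "D \<ge> 0" and s0: "s0 \<in> S"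
    and C: "C = {j\<in>S. j = s0 \<or> d s0 j < D}"
    and ij: "i \<in> S" "j \<in> S" "i \<noteq> j"
  shows "(i\<in>C \<longleftrightarrow> j\<in>C) \<Longrightarrow> d i j < D" and "\<not>(i\<in>C \<longleftrightarrow> j\<in>C) \<Longrightarrow> d i j = D"
proof -
  have sym: "\<And>x y. d x y = d y x" using GS_sym[OF d] by blast
  have rg: "\<And>x y. x\<in>S \<Longrightarrow> y\<in>S \<Longrightarrow> x\<noteq>y \<Longrightarrow> -1 \<le> d x y \<and> d x y \<le> D" using GS_range[OF d] by blast
  note U = ultra[OF d]
  show "(i\<in>C \<longleftrightarrow> j\<in>C) \<Longrightarrow> d i j < D"
  proof -
    assume same: "i\<in>C \<longleftrightarrow> j\<in>C"
    show ?thesis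
    proof (cases "i \<in> C")
      case True
      then have jC: "j \<in> C" using same by auto
      show ?thesis
      proof (cases "i = s0 \<or> j = s0")
        case True
        then show ?thesis using True jC \<open>i\<in>C\<close> ij C sym by auto
      next
        case False
        then have "d i j \<le> max (d i s0) (d j s0)" using U(1)[of i j s0] ij s0 by auto
        moreover have "d s0 i < D" "d s0 j < D" using False jC \<open>i\<in>C\<close> C by auto
        ultimately show ?thesis using sym by (simp add: max_def split: if_splits)
      qed
    next
      case False
      then have jC: "j \<notin> C" using same by auto
      have ne: "i \<noteq> s0" "j \<noteq> s0" using False jC C ij s0 by auto
      have "d s0 i = D" "d s0 j = D" using False jC C ij rg[of s0 i] rg[of s0 j] s0 ne by auto
      moreover have "d i j \<le> D" using rg[of i j] ij by auto
      moreover have "d i j \<noteq> D"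
      proof
        assume "d i j = D"
        then have "d i j = -1" using U(2)[of i j s0] ij s0 ne sym \<open>d s0 i = D\<close> \<open>d s0 j = D\<close> by auto
        then show False using \<open>d i j = D\<close> D by simp
      qed
      ultimately show ?thesis by simp
    qed
  qed
  show "\<not>(i\<in>C \<longleftrightarrow> j\<in>C) \<Longrightarrow> d i j = D"
  proof -
    assume diff: "\<not>(i\<in>C \<longleftrightarrow> j\<in>C)"
    have key: "d x y = D" if xC: "x \<in> C" and yC: "y \<notin> C" and xy: "x\<in>S" "y\<in>S" "x\<noteq>y" for x y
    proof -
      have ny: "y \<noteq> s0" using yC C s0 by auto
      have dy: "d s0 y = D" using yC C xy rg[of s0 y] s0 ny by auto
      show ?thesis
      proof (cases "x = s0")
        case True then show ?thesis using dy by simp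
      next
        case False
        have dx: "d s0 x < D" using xC C False by auto
        have "d s0 y \<le> max (d s0 x) (d y x)" using U(1)[of s0 y x] xy s0 ny False by auto
        then have "d y x \<ge> D" using dx dy by (simp add: max_def split: if_splits)
        then show ?thesis using rg[of x y] xy sym by force
      qed
    qed
    show ?thesis
    proof (cases "i \<in> C")
      case True then show ?thesis using key[of i j] diff ij by auto
    next
      case False then show ?thesis using key[of j i] diff ij sym by auto
    qed
  qed
qed


lemma split_card:
  assumes fin: "finite S" and s0: "s0 \<in> S" and D: "D \<ge> 0"
  shows "(\<Sum>A\<in>Pow S. card (GS (D-1) A) * card (GS (D-1) (S-A))) = 2 * card (GS D S)"
proof -
  define T where "T = Sigma (Pow S) (\<lambda>A. GS (D-1) A \<times> GS (D-1) (S-A))"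
  define f where "f = (\<lambda>(A,(d1,d2)). (glue D S A d1 d2, s0 \<in> A))"
  have cT: "card T = (\<Sum>A\<in>Pow S. card (GS (D-1) A) * card (GS (D-1) (S-A)))"
    unfolding T_def using fin
    by (subst card_SigmaI) (auto simp: card_cartesian_product intro!: finite_GS finite_cartesian_product intro: finite_subset)
  have inj: "inj_on f T"
  proof (rule inj_onI)
    fix x y assume x: "x \<in> T" and y: "y \<in> T" and eq: "f x = f y"
    obtain A d1 d2 where xe: "x = (A,(d1,d2))" by (cases x) auto
    obtain B e1 e2 where ye: "y = (B,(e1,e2))" by (cases y) auto
    have A: "A \<subseteq> S" "d1 \<in> GS (D-1) A" "d2 \<in> GS (D-1) (S-A)" using x xe T_def by auto
    have B: "B \<subseteq> S" "e1 \<in> GS (D-1) B" "e2 \<in> GS (D-1) (S-B)" using y ye T_def by auto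
    have g: "glue D S A d1 d2 = glue D S B e1 e2" and s: "(s0 \<in> A) = (s0 \<in> B)"
      using eq xe ye f_def by auto
    have AB: "A = B"
    proof (rule set_eqI)
      fix j show "j \<in> A \<longleftrightarrow> j \<in> B"
      proof (cases "j \<in> S \<and> j \<noteq> s0")
        case True
        then show ?thesis using memb[OF D A, of j s0] memb[OF D B, of j s0] s0 g s by auto
      next
        case False
        then show ?thesis using s A(1) B(1) by auto
      qed
    qed
    have "d1 = e1" using glue_restr1[OF A(2), of S d2] glue_restr1[OF B(2), of S e2] g AB by simp
    moreover have "d2 = e2" using glue_restr2[OF A(3), of d1] glue_restr2[OF B(3), of e1] g AB by simp
    ultimately show "x = y" using xe ye AB by simp
  qed
  have img: "f ` T = GS D S \<times> UNIV"
  proof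
    show "f ` T \<subseteq> GS D S \<times> UNIV" using glue_in[OF D] by (auto simp: f_def T_def)
  next
    show "GS D S \<times> UNIV \<subseteq> f ` T"
    proof clarify
      fix d and b :: bool assume d: "d \<in> GS D S"
      define C where "C = {j\<in>S. j = s0 \<or> d s0 j < D}"
      define A where "A = (if b then C else S - C)"
      have AS: "A \<subseteq> S" by (auto simp: A_def C_def)
      have side: "(i\<in>A \<longleftrightarrow> j\<in>A) = (i\<in>C \<longleftrightarrow> j\<in>C)" if "i\<in>S" "j\<in>S" for i j
        using that by (auto simp: A_def)
      have lt: "d i j < D" if "i\<in>S" "j\<in>S" "i\<noteq>j" "(i\<in>A \<longleftrightarrow> j\<in>A)" for i j
        using classes(1)[OF d D s0 C_def, of i j] that side by auto
      have eqD: "d i j = D" if "i\<in>S" "j\<in>S" "i\<noteq>j" "\<not>(i\<in>A \<longleftrightarrow> j\<in>A)" for i j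
        using classes(2)[OF d D s0 C_def, of i j] that side by auto
      have r1: "restr A d \<in> GS (D-1) A"
        by (rule restr_in[OF d AS]) (use lt AS in auto)
      have r2: "restr (S-A) d \<in> GS (D-1) (S-A)"
        by (rule restr_in[OF d]) (use lt in auto)
      have gl: "glue D S A (restr A d) (restr (S-A) d) = d"
      proof (intro ext)
        fix i j show "glue D S A (restr A d) (restr (S-A) d) i j = d i j"
        proof (cases "i\<in>S \<and> j\<in>S")
          case True
          then show ?thesis using eqD[of i j] AS by (auto simp: glue_def restr_def)
        next
          case False
          then show ?thesis using GS_zero[OF d, of i j] AS by (auto simp: glue_def restr_def)
        qed
      qed
      have sb: "(s0 \<in> A) = b" using s0 by (auto simp: A_def C_def)
      have "(A, (restr A d, restr (S-A) d)) \<in> T" using AS r1 r2 by (auto simp: T_def)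
      moreover have "f (A, (restr A d, restr (S-A) d)) = (d, b)" using gl sb by (simp add: f_def)
      ultimately show "(d, b) \<in> f ` T" by force
    qed
  qed
  have "card T = card (GS D S \<times> (UNIV :: bool set))"
    using bij_betw_same_card[of f T] inj img by (simp add: bij_betw_def)
  also have "\<dots> = 2 * card (GS D S)" by (simp add: card_cartesian_product)
  finally show ?thesis using cT by simp
qed


lemma GS_bij_le:
  assumes h: "bij_betw h S' S" and fin: "finite S"
  shows "card (GS D S) \<le> card (GS D S')"
proof -
  have fin': "finite S'" using h fin bij_betw_finite by blast
  have inj: "inj_on h S'" and im: "h ` S' = S" using h by (auto simp: bij_betw_def)
  define F where "F = (\<lambda>d i j. if i\<in>S' \<and> j\<in>S' then d (h i) (h j) else (0::int))"
  have into: "F d \<in> GS D S'" if d: "d \<in> GS D S" for d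
  proof -
    have sym: "F d i j = F d j i" for i j using GS_sym[OF d] by (auto simp: F_def)
    have hne: "h i \<noteq> h j" if "i\<in>S'" "j\<in>S'" "i\<noteq>j" for i j using inj that by (auto dest: inj_onD)
    have rng: "-1 \<le> F d i j \<and> F d i j \<le> D" if "i\<in>S'" "j\<in>S'" "i\<noteq>j" for i j
      using that GS_range[OF d, of "h i" "h j"] hne[OF that] im by (auto simp: F_def)
    have zer: "F d i j = 0" if "\<not> (i\<in>S' \<and> j\<in>S' \<and> i\<noteq>j)" for i j
      using that GS_zero[OF d, of "h i" "h i"] by (auto simp: F_def)
    have prp: "properS S' (F d)"
      unfolding properS_def
    proof (intro ballI impI)
      fix a b c assume abc: "a\<in>S'" "b\<in>S'" "c\<in>S'" and hh: "a \<noteq> b \<and> a \<noteq> c \<and> b \<noteq> c \<and> F d a b \<le> F d a c \<and> F d a c \<le> F d b c"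
      have "h a \<in> S" "h b \<in> S" "h c \<in> S" using abc im by auto
      moreover have "h a \<noteq> h b" "h a \<noteq> h c" "h b \<noteq> h c" using hne abc hh by auto
      ultimately show "(F d a b = -1 \<and> F d a c = -1 \<and> F d b c = -1) \<or> (F d a b < F d a c \<and> F d a c = F d b c)"
        using properD[OF GS_proper[OF d], of "h a" "h b" "h c"] abc hh by (auto simp: F_def)
    qed
    show ?thesis unfolding GS_def using sym rng zer prp by blast
  qed
  have injF: "inj_on F (GS D S)"
  proof (rule inj_onI)
    fix d e assume d: "d \<in> GS D S" and e: "e \<in> GS D S" and eq: "F d = F e"
    show "d = e"
    proof (intro ext)
      fix x y show "d x y = e x y"
      proof (cases "x\<in>S \<and> y\<in>S")
        case True
        then obtain i j where "i\<in>S'" "j\<in>S'" "x = h i" "y = h j" using im by blast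
        then show ?thesis using fun_cong[OF fun_cong[OF eq, of i], of j] by (simp add: F_def)
      next
        case False
        then show ?thesis using GS_zero[OF d, of x y] GS_zero[OF e, of x y] by auto
      qed
    qed
  qed
  show ?thesis
    by (rule card_inj_on_le[OF injF]) (use into finite_GS[OF fin'] in auto)
qed

lemma GS_bij_eq:
  assumes h: "bij_betw h S' S" and fin: "finite S"
  shows "card (GS D S) = card (GS D S')"
proof -
  have fin': "finite S'" using h fin bij_betw_finite by blast
  show ?thesis using GS_bij_le[OF h fin, of D] GS_bij_le[OF bij_betw_inv_into[OF h] fin', of D] by (rule le_antisym)
qed

lemma card_GS_NN: assumes "finite S" shows "card (GS (int r - 1) S) = NN r (card S)"
proof -
  obtain h where "bij_betw h {1..card S} S" using ex_bij_betw_nat_finite_1[OF assms] by blast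
  then show ?thesis using GS_bij_eq assms NN_GS by metis
qed

lemma sum_pow_card:
  fixes F :: "nat \<Rightarrow> nat"
  assumes fin: "finite S"
  shows "(\<Sum>A\<in>Pow S. F (card A)) = (\<Sum>a=0..card S. (card S choose a) * F a)"
proof -
  have "(\<Sum>A\<in>Pow S. F (card A)) = (\<Sum>a\<in>{0..card S}. \<Sum>A\<in>{A. A \<in> Pow S \<and> card A = a}. F (card A))"
    by (rule sum.group[symmetric]) (use fin in \<open>auto intro: card_mono\<close>)
  also have "\<dots> = (\<Sum>a\<in>{0..card S}. (card S choose a) * F a)"
  proof (rule sum.cong[OF refl])
    fix a assume "a \<in> {0..card S}"
    have "(\<Sum>A\<in>{A. A \<in> Pow S \<and> card A = a}. F (card A)) = (\<Sum>A\<in>{A. A \<in> Pow S \<and> card A = a}. F a)"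
      by (rule sum.cong) auto
    also have "\<dots> = card {A. A \<subseteq> S \<and> card A = a} * F a" by simp
    also have "\<dots> = (card S choose a) * F a" using n_subsets[OF fin] by simp
    finally show "(\<Sum>A\<in>{A. A \<in> Pow S \<and> card A = a}. F (card A)) = (card S choose a) * F a" .
  qed
  finally show ?thesis .
qed

lemma NN_rec:
  assumes r: "r \<ge> 1" and k: "k \<ge> 1"
  shows "2 * NN r k = (\<Sum>a=0..k. (k choose a) * (NN (r-1) a * NN (r-1) (k-a)))"
proof -
  let ?S = "{1..k}" and ?D = "int r - 1"
  have D1: "?D - 1 = int (r-1) - 1" using r by simp
  have "2 * NN r k = 2 * card (GS ?D ?S)" by (simp add: NN_GS)
  also have "\<dots> = (\<Sum>A\<in>Pow ?S. card (GS (?D-1) A) * card (GS (?D-1) (?S-A)))"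
    using split_card[of ?S 1 ?D] r k by simp
  also have "\<dots> = (\<Sum>A\<in>Pow ?S. NN (r-1) (card A) * NN (r-1) (k - card A))"
  proof (rule sum.cong[OF refl])
    fix A assume A: "A \<in> Pow ?S"
    then have fA: "finite A" using finite_subset by blast
    have "card (?S - A) = k - card A" using A by (simp add: card_Diff_subset fA)
    then show "card (GS (?D-1) A) * card (GS (?D-1) (?S-A)) = NN (r-1) (card A) * NN (r-1) (k - card A)"
      unfolding D1 using card_GS_NN fA by simp
  qed
  also have "\<dots> = (\<Sum>a=0..k. (k choose a) * (NN (r-1) a * NN (r-1) (k-a)))"
    using sum_pow_card[of ?S "\<lambda>a. NN (r-1) a * NN (r-1) (k - a)"] by simp
  finally show ?thesis .
qed


lemma NN0: "NN 0 k = 1"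
proof (cases "k = 0")
  case True then show ?thesis by (simp add: NN_def)
next
  case False
  define d0 where "d0 = (\<lambda>i j. if i\<in>{1..k} \<and> j\<in>{1..k} \<and> i \<noteq> j then (-1::int) else 0)"
  have "GS (-1) {1..k} = {d0}"
  proof
    show "GS (-1) {1..k} \<subseteq> {d0}"
    proof
      fix d assume d: "d \<in> GS (-1) {1..k}"
      have "d = d0"
      proof (intro ext)
        fix i j show "d i j = d0 i j"
          using GS_range[OF d, of i j] GS_zero[OF d, of i j] by (cases "i\<in>{1..k} \<and> j\<in>{1..k} \<and> i \<noteq> j") (auto simp: d0_def)
      qed
      then show "d \<in> {d0}" by simp
    qed
  next
    show "{d0} \<subseteq> GS (-1) {1..k}"
      by (auto simp: GS_def d0_def properS_def)
  qed
  then show ?thesis using NN_GS[of 0 k] by simp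
qed

lemma NN_zero: "NN r 0 = 1" by (simp add: NN_def)

lemma NN_rec_real:
  assumes r: "r \<ge> 1" and k: "k \<ge> 1"
  shows "real (NN r k) = (1/2) * (\<Sum>a=0..k. real (k choose a) * real (NN (r-1) a) * real (NN (r-1) (k-a)))"
proof -
  have "real (2 * NN r k) = real (\<Sum>a=0..k. (k choose a) * (NN (r-1) a * NN (r-1) (k-a)))"
    using NN_rec[OF r k] by simp
  then show ?thesis by (simp add: of_nat_sum mult.assoc)
qed

lemma NN_rec_all:
  assumes r: "r \<ge> 1"
  shows "real (NN r k) = (1/2) * (0 ^ k + (\<Sum>a=0..k. real (k choose a) * real (NN (r-1) a) * real (NN (r-1) (k-a))))"
proof (cases "k = 0")
  case True then show ?thesis by (simp add: NN_zero)
next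
  case False then show ?thesis using NN_rec_real[OF r, of k] by simp
qed

lemma EGF0: "EGF 0 = fps_exp 1"
  by (simp add: fps_eq_iff EGF_def fps_exp_def NN0)

lemma EGF_rec:
  assumes r: "r \<ge> 1"
  shows "EGF r = fps_const (1/2) * (1 + (EGF (r-1))^2)"
proof (rule fps_ext)
  fix n
  have "fps_nth (fps_const (1/2) * (1 + (EGF (r-1))^2)) n =
      (1/2) * ((if n = 0 then 1 else 0) + (\<Sum>i=0..n. real (NN (r-1) i) / fact i * (real (NN (r-1) (n-i)) / fact (n-i))))"
    unfolding fps_mult_left_const_nth unfolding fps_add_nth fps_one_nth power2_eq_square fps_mult_nth by (simp add: EGF_def)
  also have "(\<Sum>i=0..n. real (NN (r-1) i) / fact i * (real (NN (r-1) (n-i)) / fact (n-i)))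
      = (\<Sum>i=0..n. real (n choose i) * real (NN (r-1) i) * real (NN (r-1) (n-i))) / fact n"
    unfolding sum_divide_distrib
  proof (rule sum.cong[OF refl])
    fix i assume "i \<in> {0..n}"
    then have "i \<le> n" by simp
    then show "real (NN (r-1) i) / fact i * (real (NN (r-1) (n-i)) / fact (n-i)) =
       real (n choose i) * real (NN (r-1) i) * real (NN (r-1) (n-i)) / fact n"
      by (simp add: binomial_fact field_simps)
  qed
  finally have eq: "fps_nth (fps_const (1/2) * (1 + (EGF (r-1))^2)) n =
      (1/2) * ((if n = 0 then 1 else 0) + (\<Sum>i=0..n. real (n choose i) * real (NN (r-1) i) * real (NN (r-1) (n-i))) / fact n)" .
  show "fps_nth (EGF r) n = fps_nth (fps_const (1/2) * (1 + (EGF (r-1))^2)) n"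
  proof (cases "n = 0")
    case True then show ?thesis using eq by (simp add: EGF_def NN_zero)
  next
    case False
    then show ?thesis using eq NN_rec_real[OF r, of n] by (simp add: EGF_def field_simps)
  qed
qed


lemma swap3: "(\<Sum>i\<in>I. \<Sum>j\<in>J. \<Sum>a\<in>K. f i j a) = (\<Sum>a\<in>K. \<Sum>i\<in>I. \<Sum>j\<in>J. f i j a)"
proof -
  have "(\<Sum>i\<in>I. \<Sum>j\<in>J. \<Sum>a\<in>K. f i j a) = (\<Sum>i\<in>I. \<Sum>a\<in>K. \<Sum>j\<in>J. f i j a)"
    by (rule sum.cong[OF refl], rule sum.swap)
  also have "\<dots> = (\<Sum>a\<in>K. \<Sum>i\<in>I. \<Sum>j\<in>J. f i j a)" by (rule sum.swap)
  finally show ?thesis .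
qed

lemma nu_ex: "\<exists>\<nu> :: nat \<Rightarrow> real. (\<forall>m. \<nu> m \<ge> 0) \<and> (\<forall>m. m > 2^r \<longrightarrow> \<nu> m = 0)
   \<and> (\<forall>k. real (NN r k) = (\<Sum>m=0..2^r. \<nu> m * real m ^ k)) \<and> \<nu> 0 = 1 - mu r"
proof (induction r)
  case 0
  show ?case
    by (rule exI[of _ "\<lambda>m. if m = 1 then 1 else 0"]) (simp add: NN0)
next
  case (Suc r)
  then obtain \<nu> :: "nat \<Rightarrow> real" where nn: "\<forall>m. \<nu> m \<ge> 0" and sup: "\<forall>m. m > 2^r \<longrightarrow> \<nu> m = 0"
    and id: "\<forall>k. real (NN r k) = (\<Sum>m=0..2^r. \<nu> m * real m ^ k)" and v0: "\<nu> 0 = 1 - mu r" by blast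
  define N :: nat where "N = 2^r"
  define Q where "Q = {0..N} \<times> {0..N}"
  define \<nu>' where "\<nu>' = (\<lambda>m. (if m = 0 then 1/2 else 0) + 1/2 * (\<Sum>p\<in>{p\<in>Q. fst p + snd p = m}. \<nu> (fst p) * \<nu> (snd p)))"
  have fQ: "finite Q" by (simp add: Q_def)
  have nn': "\<forall>m. \<nu>' m \<ge> 0" using nn by (auto simp: \<nu>'_def intro!: sum_nonneg add_nonneg_nonneg)
  have sup': "\<forall>m. m > 2^Suc r \<longrightarrow> \<nu>' m = 0"
  proof (intro allI impI)
    fix m :: nat assume m: "m > 2^Suc r"
    have e: "{p\<in>Q. fst p + snd p = m} = {}" using m by (auto simp: Q_def N_def)
    show "\<nu>' m = 0" using m unfolding \<nu>'_def e by simp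
  qed
  have v0': "\<nu>' 0 = 1 - mu (Suc r)"
  proof -
    have e: "{p\<in>Q. fst p + snd p = 0} = {(0,0)}" by (auto simp: Q_def)
    have "\<nu>' 0 = 1/2 + 1/2 * (\<nu> 0)^2" unfolding \<nu>'_def e by (simp add: power2_eq_square)
    then show ?thesis using v0 by (simp add: power2_eq_square algebra_simps)
  qed
  have id': "real (NN (Suc r) k) = (\<Sum>m=0..2^Suc r. \<nu>' m * real m ^ k)" for k
  proof -
    let ?M = "{0..(2::nat)^Suc r}"
    have A: "(\<Sum>m\<in>?M. (if m = 0 then 1/2 else 0) * real m ^ k) = 1/2 * 0 ^ k"
    proof -
      have "(\<Sum>m\<in>?M. (if m = 0 then 1/2 else 0) * real m ^ k) = (\<Sum>m\<in>?M. if m = 0 then 1/2 * 0 ^ k else 0)"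
        by (rule sum.cong) auto
      also have "\<dots> = 1/2 * 0^k" by (simp add: sum.delta)
      finally show ?thesis .
    qed
    have B: "(\<Sum>m\<in>?M. (\<Sum>p\<in>{p\<in>Q. fst p + snd p = m}. \<nu> (fst p) * \<nu> (snd p)) * real m ^ k)
        = (\<Sum>p\<in>Q. \<nu> (fst p) * \<nu> (snd p) * real (fst p + snd p) ^ k)"
    proof -
      have "(\<Sum>m\<in>?M. (\<Sum>p\<in>{p\<in>Q. fst p + snd p = m}. \<nu> (fst p) * \<nu> (snd p)) * real m ^ k)
          = (\<Sum>m\<in>?M. (\<Sum>p\<in>{p\<in>Q. fst p + snd p = m}. \<nu> (fst p) * \<nu> (snd p) * real (fst p + snd p) ^ k))"
        by (rule sum.cong[OF refl]) (simp add: sum_distrib_right)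
      also have "\<dots> = (\<Sum>p\<in>Q. \<nu> (fst p) * \<nu> (snd p) * real (fst p + snd p) ^ k)"
        by (rule sum.group) (use fQ in \<open>auto simp: Q_def N_def\<close>)
      finally show ?thesis .
    qed
    have C: "(\<Sum>p\<in>Q. \<nu> (fst p) * \<nu> (snd p) * real (fst p + snd p) ^ k)
       = (\<Sum>a=0..k. real (k choose a) * real (NN r a) * real (NN r (k-a)))"
    proof -
      have "(\<Sum>p\<in>Q. \<nu> (fst p) * \<nu> (snd p) * real (fst p + snd p) ^ k)
          = (\<Sum>i\<in>{0..N}. \<Sum>j\<in>{0..N}. \<nu> i * \<nu> j * (real i + real j) ^ k)"
        unfolding Q_def by (simp add: sum.cartesian_product case_prod_beta)
      also have "\<dots> = (\<Sum>i\<in>{0..N}. \<Sum>j\<in>{0..N}. \<Sum>a\<in>{0..k}. real (k choose a) * (\<nu> i * real i ^ a) * (\<nu> j * real j ^ (k-a)))"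
        by (simp add: binomial_ring atMost_atLeast0 sum_distrib_left mult_ac)
      also have "\<dots> = (\<Sum>a\<in>{0..k}. \<Sum>i\<in>{0..N}. \<Sum>j\<in>{0..N}. real (k choose a) * (\<nu> i * real i ^ a) * (\<nu> j * real j ^ (k-a)))"
        by (rule swap3)
      also have "\<dots> = (\<Sum>a\<in>{0..k}. real (k choose a) * (\<Sum>i\<in>{0..N}. \<nu> i * real i ^ a) * (\<Sum>j\<in>{0..N}. \<nu> j * real j ^ (k-a)))"
        by (simp add: sum_product sum_distrib_left mult_ac)
      also have "\<dots> = (\<Sum>a=0..k. real (k choose a) * real (NN r a) * real (NN r (k-a)))"
        using id by (simp add: N_def)
      finally show ?thesis .
    qed
    have "(\<Sum>m\<in>?M. \<nu>' m * real m ^ k) = (\<Sum>m\<in>?M. (if m = 0 then 1/2 else 0) * real m ^ k)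
       + 1/2 * (\<Sum>m\<in>?M. (\<Sum>p\<in>{p\<in>Q. fst p + snd p = m}. \<nu> (fst p) * \<nu> (snd p)) * real m ^ k)"
    proof -
      have "(\<Sum>m\<in>?M. \<nu>' m * real m ^ k) = (\<Sum>m\<in>?M. (if m = 0 then 1/2 else 0) * real m ^ k
          + 1/2 * ((\<Sum>p\<in>{p\<in>Q. fst p + snd p = m}. \<nu> (fst p) * \<nu> (snd p)) * real m ^ k))"
        by (rule sum.cong[OF refl]) (simp only: \<nu>'_def distrib_right mult.assoc)
      then show ?thesis by (simp only: sum.distrib sum_distrib_left)
    qed
    also have "\<dots> = 1/2 * (0^k + (\<Sum>a=0..k. real (k choose a) * real (NN r a) * real (NN r (k-a))))"
      using A B C by (simp add: algebra_simps)
    also have "\<dots> = real (NN (Suc r) k)" using NN_rec_all[of "Suc r" k] by simp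
    finally show ?thesis by simp
  qed
  show ?case using nn' sup' id' v0' by blast
qed

theorem mainTheorem14:
  shows "(\<forall>k. NN 0 k = 1)
    \<and> (\<forall>r k. r \<ge> 1 \<longrightarrow> k \<ge> 1 \<longrightarrow>
          real (NN r k) = (1/2) * (\<Sum>a=0..k. real (k choose a) * real (NN (r-1) a) * real (NN (r-1) (k-a))))
    \<and> EGF 0 = fps_exp 1
    \<and> (\<forall>r. r \<ge> 1 \<longrightarrow> EGF r = fps_const (1/2) * (1 + (EGF (r-1))^2))
    \<and> (\<forall>r. \<exists>\<nu> :: nat \<Rightarrow> real.
          (\<forall>m\<in>{0..2^r}. \<nu> m \<ge> 0)
        \<and> (\<Sum>m=0..2^r. \<nu> m) = 1
        \<and> (\<forall>k. real (NN r k) = (\<Sum>m=0..2^r. \<nu> m * real m ^ k))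
        \<and> \<nu> 0 = 1 - mu r)"
proof (intro conjI allI impI)
  fix r :: nat
  obtain \<nu> :: "nat \<Rightarrow> real" where nn: "\<forall>m. \<nu> m \<ge> 0"
    and id: "\<forall>k. real (NN r k) = (\<Sum>m=0..2^r. \<nu> m * real m ^ k)" and v0: "\<nu> 0 = 1 - mu r"
    using nu_ex[of r] by blast
  have "(\<Sum>m=0..2^r. \<nu> m) = 1" using id[rule_format, of 0] by (simp add: NN_zero)
  then show "\<exists>\<nu> :: nat \<Rightarrow> real.
          (\<forall>m\<in>{0..2^r}. \<nu> m \<ge> 0)
        \<and> (\<Sum>m=0..2^r. \<nu> m) = 1
        \<and> (\<forall>k. real (NN r k) = (\<Sum>m=0..2^r. \<nu> m * real m ^ k))
        \<and> \<nu> 0 = 1 - mu r" using nn id v0 by blast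
qed (auto simp: NN0 NN_rec_real EGF0 EGF_rec)

end
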